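(* Let $m\ge 2$ and let $W$ be a channel from $\{1,\dots,m\}$ to $\{1,2\}$. Then \[ \underline{C}_{10}(W)=C(W)\quad\text{and}\quad \overline{C}_{10}(W)=C\left(\begin{pmatrix}1&0\\ \underline{P}_W(1)&1-\underline{P}_W(1)\end{pmatrix}\right). \]
   Context: A channel from a finite set $\mathcal{A}$ to a finite set $\mathcal{B}$ is a row-stochastic matrix $(W_{a,b})$. For a probability distribution $\mu$ on the input set, $I(\mu,W)=\sum_x\mu_x D(W_{x,*}\|\mu W)$ (Kullback–Leibler divergence, base-2 logarithm), and $C(W)=\max_\mu I(\mu,W)$. Let $\mathcal{X}=\{1,\dots,m\}$, $\mathcal{Y}=\{1,\dots,n\}$ (here $n=2$). A deterministic channel is a 0-1 channel, identified with a map $D:\mathcal{X}\to\mathcal{Y}$; $\mathcal{D}$ is the set of all of them and $\mathrm{rank}(D)$ is the matrix rank. $\Lambda(W)=\{\lambda\text{ probability distribution on }\mathcal{D}: W=\sum_D\lambda_DD\}$. For $\lambda\in\Lambda(W)$, $C_{10}(\lambda)=\max_{\mu} I(\mu,V^\lambda)$, where $\mu$ ranges over probability distributions on the set $\mathcal{X}^{\mathcal{D}}$ of maps $u:\mathcal{D}\to\mathcal{X}$, and $V^\lambda$ is the channel from $\mathcal{X}^{\mathcal{D}}$ to $\mathcal{Y}$ with $V^\lambda_{u,y}=\sum_D\lambda_D D_{u(D),y}$. $\underline{C}_{10}(W)=\inf_{\lambda\in\Lambda(W)}C_{10}(\lambda)$, $\overline{C}_{10}(W)=\sup_{\lambda\in\Lambda(W)}C_{10}(\lambda)$.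 $\underline{P}_W(1)=\min_{\lambda\in\Lambda(W)}\lambda(\{D:\mathrm{rank}(D)=1\})$. *)

theory Defs
  imports "HOL-Analysis.Analysis" "Jordan_Normal_Form.DL_Rank"
begin

(* Alphabets: X = {0..<m}, Y = {0..<n} (0-based rendering of {1..m}, {1..n}). *)

definition prob_dist :: "'a set \<Rightarrow> ('a \<Rightarrow> real) \<Rightarrow> bool" where
  "prob_dist A p \<longleftrightarrow> (\<forall>x\<in>A. 0 \<le> p x) \<and> sum p A = 1"

definition is_channel :: "'a set \<Rightarrow> 'b set \<Rightarrow> ('a \<Rightarrow> 'b \<Rightarrow> real) \<Rightarrow> bool" where
  "is_channel A B W \<longleftrightarrow> (\<forall>a\<in>A. prob_dist B (W a))"

definition out_dist :: "'a set \<Rightarrow> ('a \<Rightarrow> real) \<Rightarrow> ('a \<Rightarrow> 'b \<Rightarrow> real) \<Rightarrow> 'b \<Rightarrow> real" where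
  "out_dist A \<mu> W b = (\<Sum>x\<in>A. \<mu> x * W x b)"

definition KL :: "'b set \<Rightarrow> ('b \<Rightarrow> real) \<Rightarrow> ('b \<Rightarrow> real) \<Rightarrow> real" where
  "KL B p q = (\<Sum>b\<in>B. if p b = 0 then 0 else p b * log 2 (p b / q b))"

definition mutual_info :: "'a set \<Rightarrow> 'b set \<Rightarrow> ('a \<Rightarrow> real) \<Rightarrow> ('a \<Rightarrow> 'b \<Rightarrow> real) \<Rightarrow> real" where
  "mutual_info A B \<mu> W = (\<Sum>x\<in>A. if \<mu> x = 0 then 0 else \<mu> x * KL B (W x) (out_dist A \<mu> W))"

definition capacity :: "'a set \<Rightarrow> 'b set \<Rightarrow> ('a \<Rightarrow> 'b \<Rightarrow> real) \<Rightarrow> real" where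
  "capacity A B W = Sup {mutual_info A B \<mu> W | \<mu>. prob_dist A \<mu>}"

(* deterministic channels = maps D : X -> Y (extensional) *)
definition det_maps :: "nat \<Rightarrow> nat \<Rightarrow> (nat \<Rightarrow> nat) set" where
  "det_maps m n = PiE {0..<m} (\<lambda>_. {0..<n})"

definition det_entry :: "(nat \<Rightarrow> nat) \<Rightarrow> nat \<Rightarrow> nat \<Rightarrow> real" where
  "det_entry D x y = (if D x = y then 1 else 0)"

definition det_matrix :: "nat \<Rightarrow> nat \<Rightarrow> (nat \<Rightarrow> nat) \<Rightarrow> real mat" where
  "det_matrix m n D = mat m n (\<lambda>(x, y). det_entry D x y)"

definition det_rank :: "nat \<Rightarrow> nat \<Rightarrow> (nat \<Rightarrow> nat) \<Rightarrow> nat" where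
  "det_rank m n D = vec_space.rank m (det_matrix m n D)"

definition Lambda :: "nat \<Rightarrow> nat \<Rightarrow> (nat \<Rightarrow> nat \<Rightarrow> real) \<Rightarrow> ((nat \<Rightarrow> nat) \<Rightarrow> real) set" where
  "Lambda m n W = {lam. prob_dist (det_maps m n) lam \<and>
      (\<forall>x\<in>{0..<m}. \<forall>y\<in>{0..<n}. W x y = (\<Sum>D\<in>det_maps m n. lam D * det_entry D x y))}"

definition strategies :: "nat \<Rightarrow> nat \<Rightarrow> ((nat \<Rightarrow> nat) \<Rightarrow> nat) set" where
  "strategies m n = PiE (det_maps m n) (\<lambda>_. {0..<m})"

definition V_chan :: "nat \<Rightarrow> nat \<Rightarrow> ((nat \<Rightarrow> nat) \<Rightarrow> real) \<Rightarrow> ((nat \<Rightarrow> nat) \<Rightarrow> nat) \<Rightarrow> nat \<Rightarrow> real" where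
  "V_chan m n lam u y = (\<Sum>D\<in>det_maps m n. lam D * det_entry D (u D) y)"

definition C10 :: "nat \<Rightarrow> nat \<Rightarrow> ((nat \<Rightarrow> nat) \<Rightarrow> real) \<Rightarrow> real" where
  "C10 m n lam = capacity (strategies m n) {0..<n} (V_chan m n lam)"

definition lower_C10 :: "nat \<Rightarrow> nat \<Rightarrow> (nat \<Rightarrow> nat \<Rightarrow> real) \<Rightarrow> real" where
  "lower_C10 m n W = Inf (C10 m n ` Lambda m n W)"

definition upper_C10 :: "nat \<Rightarrow> nat \<Rightarrow> (nat \<Rightarrow> nat \<Rightarrow> real) \<Rightarrow> real" where
  "upper_C10 m n W = Sup (C10 m n ` Lambda m n W)"

definition lower_P1 :: "nat \<Rightarrow> nat \<Rightarrow> (nat \<Rightarrow> nat \<Rightarrow> real) \<Rightarrow> real" where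
  "lower_P1 m n W = Inf ((\<lambda>lam. \<Sum>D\<in>{D\<in>det_maps m n. det_rank m n D = 1}. lam D) ` Lambda m n W)"

definition Z_chan :: "real \<Rightarrow> nat \<Rightarrow> nat \<Rightarrow> real" where
  "Z_chan p x y = (if x = 0 then (if y = 0 then 1 else 0) else (if y = 0 then p else 1 - p))"

end

theory Submission
  imports Defs "HOL-Real_Asymp.Real_Asymp"
begin


definition xl :: "real \<Rightarrow> real" where "xl p = p * log 2 p"
definition phi :: "real \<Rightarrow> real \<Rightarrow> real" where
  "phi p r = (if p = 0 then 0 else p * log 2 (p / r))"
definition hb :: "real \<Rightarrow> real" where "hb v = - (xl v + xl (1 - v))"
definition Gf :: "real \<Rightarrow> real \<Rightarrow> real \<Rightarrow> real" where
  "Gf a b t = hb (t * a + (1 - t) * b) - t * hb a - (1 - t) * hb b"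
definition Kc :: "real \<Rightarrow> real \<Rightarrow> real" where
  "Kc a b = Sup (Gf a b ` {0..1})"

lemma ln_ineq:
  fixes u c U C :: real
  assumes "u > 0" "c > 0" "U > 0" "C > 0"
  shows "u * ln (U / C) - u * ln (u / c) \<le> c * U / C - u"
proof -
  have pos: "c * U / (u * C) > 0" using assms by simp
  have "ln (c * U / (u * C)) \<le> c * U / (u * C) - 1" by (rule ln_le_minus_one[OF pos])
  moreover have "c * U / (u * C) = (U / C) / (u / c)" using assms by (simp add: field_simps)
  moreover have "ln ((U / C) / (u / c)) = ln (U / C) - ln (u / c)"
    using assms by (subst ln_div) auto
  ultimately have "ln (U / C) - ln (u / c) \<le> c * U / (u * C) - 1" by simp
  hence "u * (ln (U / C) - ln (u / c)) \<le> u * (c * U / (u * C) - 1)"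
    using assms(1) by (simp add: mult_left_mono)
  also have "u * (c * U / (u * C) - 1) = c * U / C - u" using assms by (simp add: field_simps)
  finally show ?thesis by (simp add: algebra_simps)
qed

lemma phi_sub:
  assumes "u1 \<ge> 0" "u2 \<ge> 0" "c1 \<ge> 0" "c2 \<ge> 0" "u1 > 0 \<Longrightarrow> c1 > 0" "u2 > 0 \<Longrightarrow> c2 > 0"
  shows "phi (u1 + u2) (c1 + c2) \<le> phi u1 c1 + phi u2 c2"
proof -
  have l2: "ln (2::real) > 0" by simp
  consider "u1 = 0" | "u2 = 0" | "u1 > 0" "u2 > 0" using assms by linarith
  then show ?thesis
  proof cases
    case 1
    show ?thesis
    proof (cases "u2 = 0")
      case True then show ?thesis using 1 by (simp add: phi_def)
    next
      case False
      hence u2: "u2 > 0" using assms by simp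
      hence c2: "c2 > 0" using assms by simp
      have "ln (u2 / (c1 + c2)) \<le> ln (u2 / c2)"
        using u2 c2 assms(3) by (simp add: frac_le divide_left_mono)
      hence "u2 * ln (u2 / (c1 + c2)) \<le> u2 * ln (u2 / c2)" using u2 by (simp add: mult_left_mono)
      hence "u2 * (ln (u2 / (c1 + c2)) / ln 2) \<le> u2 * (ln (u2 / c2) / ln 2)"
        using l2 by (simp add: divide_right_mono mult_left_mono times_divide_eq_right)
      then show ?thesis using 1 u2 by (simp add: phi_def log_def)
    qed
  next
    case 2
    show ?thesis
    proof (cases "u1 = 0")
      case True then show ?thesis using 2 by (simp add: phi_def)
    next
      case False
      hence u1: "u1 > 0" using assms by simp
      hence c1: "c1 > 0" using assms by simp
      have "ln (u1 / (c1 + c2)) \<le> ln (u1 / c1)"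
        using u1 c1 assms(4) by (simp add: frac_le divide_left_mono)
      hence "u1 * ln (u1 / (c1 + c2)) \<le> u1 * ln (u1 / c1)" using u1 by (simp add: mult_left_mono)
      hence "u1 * (ln (u1 / (c1 + c2)) / ln 2) \<le> u1 * (ln (u1 / c1) / ln 2)"
        using l2 by (simp add: divide_right_mono mult_left_mono times_divide_eq_right)
      then show ?thesis using 2 u1 by (simp add: phi_def log_def)
    qed
  next
    case 3
    have c1: "c1 > 0" and c2: "c2 > 0" using 3 assms by auto
    have a1: "u1 * ln ((u1+u2) / (c1+c2)) - u1 * ln (u1 / c1) \<le> c1 * (u1+u2) / (c1+c2) - u1"
      by (rule ln_ineq) (use 3 c1 c2 in auto)
    have a2: "u2 * ln ((u1+u2) / (c1+c2)) - u2 * ln (u2 / c2) \<le> c2 * (u1+u2) / (c1+c2) - u2"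
      by (rule ln_ineq) (use 3 c1 c2 in auto)
    have cc: "c1 + c2 \<noteq> 0" using c1 c2 by simp
    have "c1 * (u1+u2) / (c1+c2) + c2 * (u1+u2) / (c1+c2) = (c1 * (u1+u2) + c2 * (u1+u2)) / (c1+c2)"
      by (simp add: add_divide_distrib)
    also have "\<dots> = (c1 + c2) * (u1+u2) / (c1+c2)" by (simp add: distrib_right)
    also have "\<dots> = u1 + u2" using cc by simp
    finally have "c1 * (u1+u2) / (c1+c2) + c2 * (u1+u2) / (c1+c2) = u1 + u2" .
    hence "(u1 + u2) * ln ((u1+u2) / (c1+c2)) \<le> u1 * ln (u1 / c1) + u2 * ln (u2 / c2)"
      using a1 a2 by (simp add: algebra_simps)
    hence "(u1 + u2) * ln ((u1+u2) / (c1+c2)) / ln 2 \<le> (u1 * ln (u1 / c1) + u2 * ln (u2 / c2)) / ln 2"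
      using l2 by (simp add: divide_right_mono)
    then show ?thesis using 3 by (simp add: phi_def log_def add_divide_distrib)
  qed
qed

lemma phi_scale:
  assumes "th \<ge> 0"
  shows "phi (th * p) (th * r) = th * phi p r"
  using assms by (auto simp: phi_def)

lemma phi_conv:
  assumes "a1 \<ge> 0" "a2 \<ge> 0" "b1 \<ge> 0" "b2 \<ge> 0" "a1 > 0 \<Longrightarrow> b1 > 0" "a2 > 0 \<Longrightarrow> b2 > 0"
    and "0 \<le> th" "th \<le> 1"
  shows "phi (th * a1 + (1 - th) * a2) (th * b1 + (1 - th) * b2) \<le> th * phi a1 b1 + (1 - th) * phi a2 b2"
proof -
  have "phi (th * a1 + (1 - th) * a2) (th * b1 + (1 - th) * b2)
        \<le> phi (th * a1) (th * b1) + phi ((1 - th) * a2) ((1 - th) * b2)"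
  proof (rule phi_sub)
    show "th * a1 > 0 \<Longrightarrow> th * b1 > 0" using assms
      by (auto simp: zero_less_mult_iff)
    show "(1 - th) * a2 > 0 \<Longrightarrow> (1 - th) * b2 > 0" using assms
      by (auto simp: zero_less_mult_iff)
  qed (use assms in auto)
  also have "\<dots> = th * phi a1 b1 + (1 - th) * phi a2 b2"
    using assms by (simp add: phi_scale)
  finally show ?thesis .
qed

lemma xl_phi: "xl p = phi p 1"
  by (simp add: xl_def phi_def)

lemma xl_conv:
  assumes "a \<ge> 0" "b \<ge> 0" "0 \<le> th" "th \<le> 1"
  shows "xl (th * a + (1 - th) * b) \<le> th * xl a + (1 - th) * xl b"
  using phi_conv[of a b 1 1 th] assms by (simp add: xl_phi)

lemma hb_conc:
  assumes "0 \<le> a" "a \<le> 1" "0 \<le> b" "b \<le> 1" "0 \<le> th" "th \<le> 1"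
  shows "th * hb a + (1 - th) * hb b \<le> hb (th * a + (1 - th) * b)"
proof -
  have 1: "xl (th * a + (1 - th) * b) \<le> th * xl a + (1 - th) * xl b" using xl_conv assms by simp
  have "xl (th * (1 - a) + (1 - th) * (1 - b)) \<le> th * xl (1 - a) + (1 - th) * xl (1 - b)"
    using xl_conv assms by simp
  moreover have "th * (1 - a) + (1 - th) * (1 - b) = 1 - (th * a + (1 - th) * b)" by (simp add: algebra_simps)
  ultimately have 2: "xl (1 - (th * a + (1 - th) * b)) \<le> th * xl (1 - a) + (1 - th) * xl (1 - b)" by simp
  show ?thesis using 1 2 unfolding hb_def by (simp add: algebra_simps)
qed

lemma xl_le0: assumes "0 \<le> p" "p \<le> 1" shows "xl p \<le> 0"
proof (cases "p = 0")
  case False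
  hence "log 2 p \<le> 0" using assms by simp
  then show ?thesis using assms by (simp add: xl_def mult_nonneg_nonpos)
qed (simp add: xl_def)

lemma xl_ge: assumes "0 \<le> p" shows "xl p \<ge> - 1 / ln 2"
proof (cases "p = 0")
  case False
  hence p: "p > 0" using assms by simp
  have "ln (1 / p) \<le> 1 / p - 1" using p by (intro ln_le_minus_one) simp
  hence "- ln p \<le> 1 / p - 1" using p by (simp add: ln_div)
  hence "p * (- ln p) \<le> p * (1 / p - 1)" by (rule mult_left_mono) (use p in auto)
  moreover have "p * (1 / p - 1) = 1 - p" using p by (simp add: field_simps)
  ultimately have "p * ln p \<ge> p - 1" by simp
  hence "p * ln p \<ge> -1" using p by simp
  hence "p * ln p / ln 2 \<ge> -1 / ln 2" by (intro divide_right_mono) auto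
  then show ?thesis by (simp add: xl_def log_def)
qed (simp add: xl_def)

lemma hb_nonneg: assumes "0 \<le> v" "v \<le> 1" shows "0 \<le> hb v"
  using xl_le0[of v] xl_le0[of "1-v"] assms by (simp add: hb_def)

lemma hb_le: assumes "0 \<le> v" "v \<le> 1" shows "hb v \<le> 2 / ln 2"
  using xl_ge[of v] xl_ge[of "1-v"] assms by (simp add: hb_def)

lemma hb_sym: "hb (1 - v) = hb v" by (simp add: hb_def)

lemma Gf_le: assumes "0 \<le> a" "a \<le> 1" "0 \<le> b" "b \<le> 1" "0 \<le> t" "t \<le> 1"
  shows "Gf a b t \<le> 2 / ln 2"
proof -
  have "0 \<le> t * a + (1 - t) * b" using assms by simp
  moreover have "t * a + (1 - t) * b \<le> t * 1 + (1 - t) * 1"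
    using assms by (intro add_mono mult_left_mono) auto
  ultimately have "hb (t * a + (1 - t) * b) \<le> 2 / ln 2" using hb_le by simp
  moreover have "0 \<le> t * hb a" "0 \<le> (1 - t) * hb b" using assms hb_nonneg by simp_all
  ultimately show ?thesis unfolding Gf_def by linarith
qed

lemma Gf_bdd: assumes "0 \<le> a" "a \<le> 1" "0 \<le> b" "b \<le> 1"
  shows "bdd_above (Gf a b ` {0..1})"
  using Gf_le assms by (intro bdd_aboveI[of _ "2 / ln 2"]) auto

lemma Gf_le_Kc: assumes "0 \<le> a" "a \<le> 1" "0 \<le> b" "b \<le> 1" "0 \<le> t" "t \<le> 1"
  shows "Gf a b t \<le> Kc a b"
  unfolding Kc_def using assms by (intro cSup_upper Gf_bdd) auto



lemma two_set: "{0..<2::nat} = {0,1}" by auto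

lemma out_ge:
  assumes "finite A" "x \<in> A" "\<forall>x\<in>A. 0 \<le> \<mu> x" "\<forall>x\<in>A. 0 \<le> W x b"
  shows "\<mu> x * W x b \<le> out_dist A \<mu> W b"
  unfolding out_dist_def using assms
  by (intro member_le_sum) auto

lemma mi_formula:
  assumes A: "finite A" and B: "finite B" and mu: "prob_dist A \<mu>" and W: "is_channel A B W"
  shows "mutual_info A B \<mu> W = (\<Sum>x\<in>A. \<mu> x * (\<Sum>b\<in>B. xl (W x b))) - (\<Sum>b\<in>B. xl (out_dist A \<mu> W b))"
proof -
  let ?q = "out_dist A \<mu> W"
  have mu0: "\<forall>x\<in>A. 0 \<le> \<mu> x" using mu by (simp add: prob_dist_def)
  have W0: "\<forall>x\<in>A. \<forall>b\<in>B. 0 \<le> W x b" using W by (simp add: is_channel_def prob_dist_def)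
  have step: "(if \<mu> x = 0 then 0 else \<mu> x * KL B (W x) ?q)
      = \<mu> x * (\<Sum>b\<in>B. xl (W x b)) - (\<Sum>b\<in>B. \<mu> x * W x b * log 2 (?q b))" if x: "x \<in> A" for x
  proof (cases "\<mu> x = 0")
    case True then show ?thesis by simp
  next
    case False
    hence mpos: "\<mu> x > 0" using mu0 x by force
    have "KL B (W x) ?q = (\<Sum>b\<in>B. xl (W x b) - W x b * log 2 (?q b))"
      unfolding KL_def
    proof (rule sum.cong)
      fix b assume b: "b \<in> B"
      show "(if W x b = 0 then 0 else W x b * log 2 (W x b / ?q b)) = xl (W x b) - W x b * log 2 (?q b)"
      proof (cases "W x b = 0")
        case True then show ?thesis by (simp add: xl_def)
      next
        case False
        hence wpos: "W x b > 0" using W0 x b by force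
        have "\<forall>x\<in>A. 0 \<le> W x b" using W0 b by auto
        hence "\<mu> x * W x b \<le> ?q b" using out_ge[OF A x mu0, of W b] by auto
        moreover have "\<mu> x * W x b > 0" using mpos wpos by simp
        ultimately have qpos: "?q b > 0" by linarith
        have L: "log 2 (W x b / ?q b) = log 2 (W x b) - log 2 (?q b)"
          using wpos qpos by (simp add: log_divide)
        have "W x b * log 2 (W x b / ?q b) = xl (W x b) - W x b * log 2 (?q b)"
          unfolding L xl_def by (simp add: right_diff_distrib)
        then show ?thesis using False by simp
      qed
    qed simp
    then have "\<mu> x * KL B (W x) ?q = \<mu> x * (\<Sum>b\<in>B. xl (W x b)) - (\<Sum>b\<in>B. \<mu> x * W x b * log 2 (?q b))"
      by (simp add: sum_subtractf right_diff_distrib sum_distrib_left mult.assoc)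
    then show ?thesis using False by simp
  qed
  have "mutual_info A B \<mu> W = (\<Sum>x\<in>A. \<mu> x * (\<Sum>b\<in>B. xl (W x b)) - (\<Sum>b\<in>B. \<mu> x * W x b * log 2 (?q b)))"
    unfolding mutual_info_def using step by (intro sum.cong) auto
  also have "\<dots> = (\<Sum>x\<in>A. \<mu> x * (\<Sum>b\<in>B. xl (W x b))) - (\<Sum>x\<in>A. \<Sum>b\<in>B. \<mu> x * W x b * log 2 (?q b))"
    by (simp add: sum_subtractf)
  also have "(\<Sum>x\<in>A. \<Sum>b\<in>B. \<mu> x * W x b * log 2 (?q b)) = (\<Sum>b\<in>B. \<Sum>x\<in>A. \<mu> x * W x b * log 2 (?q b))"
    by (rule sum.swap)
  also have "\<dots> = (\<Sum>b\<in>B. xl (?q b))"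
    by (simp add: xl_def out_dist_def sum_distrib_right)
  finally show ?thesis .
qed

lemma chan_bin:
  fixes W :: "'a \<Rightarrow> nat \<Rightarrow> real"
  assumes "is_channel A {0..<2} W" "x \<in> A"
  shows "W x 1 = 1 - W x 0" "0 \<le> W x 0" "W x 0 \<le> 1" "0 \<le> W x 1"
  using assms by (auto simp: is_channel_def prob_dist_def two_set)

lemma mi_bin:
  fixes W :: "'a \<Rightarrow> nat \<Rightarrow> real"
  assumes A: "finite A" and mu: "prob_dist A \<mu>" and W: "is_channel A {0..<2} W"
  shows "mutual_info A {0..<2} \<mu> W = hb (\<Sum>x\<in>A. \<mu> x * W x 0) - (\<Sum>x\<in>A. \<mu> x * hb (W x 0))"
proof -
  have q1: "out_dist A \<mu> W 1 = 1 - out_dist A \<mu> W 0"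
  proof -
    have "out_dist A \<mu> W 1 = (\<Sum>x\<in>A. \<mu> x - \<mu> x * W x 0)"
    proof (unfold out_dist_def, rule sum.cong)
      fix x assume x: "x \<in> A"
      show "\<mu> x * W x 1 = \<mu> x - \<mu> x * W x 0" unfolding chan_bin(1)[OF W x] by (simp add: right_diff_distrib)
    qed simp
    also have "\<dots> = 1 - out_dist A \<mu> W 0" using mu
      by (simp add: sum_subtractf out_dist_def prob_dist_def)
    finally show ?thesis .
  qed
  have "mutual_info A {0..<2} \<mu> W = (\<Sum>x\<in>A. \<mu> x * (xl (W x 0) + xl (W x 1))) - (xl (out_dist A \<mu> W 0) + xl (out_dist A \<mu> W 1))"
    using mi_formula[OF A _ mu W] by (simp add: two_set)
  also have "(\<Sum>x\<in>A. \<mu> x * (xl (W x 0) + xl (W x 1))) = - (\<Sum>x\<in>A. \<mu> x * hb (W x 0))"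
    unfolding sum_negf[symmetric] proof (rule sum.cong)
    fix x assume x: "x \<in> A"
    show "\<mu> x * (xl (W x 0) + xl (W x 1)) = - (\<mu> x * hb (W x 0))"
      unfolding chan_bin(1)[OF W x] hb_def by (simp add: algebra_simps)
  qed simp
  finally show ?thesis using q1 by (simp add: hb_def out_dist_def)
qed

lemma gap_le_K:
  assumes A: "finite A" and mu: "prob_dist A \<mu>" and ab: "0 \<le> a" "a \<le> b" "b \<le> 1"
    and v: "\<forall>x\<in>A. a \<le> v x \<and> v x \<le> b"
  shows "hb (\<Sum>x\<in>A. \<mu> x * v x) - (\<Sum>x\<in>A. \<mu> x * hb (v x)) \<le> Kc a b"
proof (cases "a = b")
  case True
  hence vx: "\<forall>x\<in>A. v x = a" using v by force
  have s1: "(\<Sum>x\<in>A. \<mu> x) = 1" using mu by (simp add: prob_dist_def)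
  have "(\<Sum>x\<in>A. \<mu> x * v x) = a" using vx s1 by (simp add: sum_distrib_right[symmetric])
  moreover have "(\<Sum>x\<in>A. \<mu> x * hb (v x)) = hb a" using vx s1 by (simp add: sum_distrib_right[symmetric])
  moreover have "Gf a b 0 \<le> Kc a b" using ab by (intro Gf_le_Kc) auto
  ultimately show ?thesis using True by (simp add: Gf_def)
next
  case False
  hence ba: "b - a > 0" using ab by simp
  define s where "s x = (b - v x) / (b - a)" for x
  have s01: "0 \<le> s x \<and> s x \<le> 1" if "x \<in> A" for x
    using v that ba by (auto simp: s_def divide_simps)
  have vs: "v x = s x * a + (1 - s x) * b" if "x \<in> A" for x
  proof -
    have "s x * (b - a) = b - v x" using ba by (simp add: s_def)
    then show ?thesis by (simp add: algebra_simps)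
  qed
  have mu0: "\<forall>x\<in>A. 0 \<le> \<mu> x" and s1: "(\<Sum>x\<in>A. \<mu> x) = 1" using mu by (auto simp: prob_dist_def)
  define t where "t = (\<Sum>x\<in>A. \<mu> x * s x)"
  have t0: "0 \<le> t" unfolding t_def using mu0 s01 by (intro sum_nonneg) auto
  have "t \<le> (\<Sum>x\<in>A. \<mu> x * 1)" unfolding t_def using mu0 s01 by (intro sum_mono mult_left_mono) auto
  hence t1: "t \<le> 1" using s1 by simp
  have "(\<Sum>x\<in>A. \<mu> x * v x) = (\<Sum>x\<in>A. (\<mu> x * s x) * a + (\<mu> x - \<mu> x * s x) * b)"
  proof (rule sum.cong)
    fix x assume x: "x \<in> A"
    show "\<mu> x * v x = (\<mu> x * s x) * a + (\<mu> x - \<mu> x * s x) * b"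
      by (subst vs[OF x]) (simp add: algebra_simps)
  qed simp
  also have "\<dots> = t * a + (1 - t) * b"
    by (simp add: sum.distrib sum_distrib_right[symmetric] sum_subtractf t_def s1)
  finally have E: "(\<Sum>x\<in>A. \<mu> x * v x) = t * a + (1 - t) * b" .
  have "(\<Sum>x\<in>A. (\<mu> x * s x) * hb a + (\<mu> x - \<mu> x * s x) * hb b) \<le> (\<Sum>x\<in>A. \<mu> x * hb (v x))"
  proof (rule sum_mono)
    fix x assume x: "x \<in> A"
    have "s x * hb a + (1 - s x) * hb b \<le> hb (s x * a + (1 - s x) * b)"
      using hb_conc[of a b "s x"] s01[OF x] ab by auto
    hence "\<mu> x * (s x * hb a + (1 - s x) * hb b) \<le> \<mu> x * hb (v x)"
      using vs[OF x] mu0 x by (simp add: mult_left_mono)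
    then show "(\<mu> x * s x) * hb a + (\<mu> x - \<mu> x * s x) * hb b \<le> \<mu> x * hb (v x)"
      by (simp add: algebra_simps)
  qed
  also have "(\<Sum>x\<in>A. (\<mu> x * s x) * hb a + (\<mu> x - \<mu> x * s x) * hb b) = t * hb a + (1 - t) * hb b"
    by (simp add: sum.distrib sum_distrib_right[symmetric] sum_subtractf t_def s1)
  finally have H: "t * hb a + (1 - t) * hb b \<le> (\<Sum>x\<in>A. \<mu> x * hb (v x))" .
  have "hb (\<Sum>x\<in>A. \<mu> x * v x) - (\<Sum>x\<in>A. \<mu> x * hb (v x)) \<le> Gf a b t"
    using E H by (simp add: Gf_def)
  also have "\<dots> \<le> Kc a b" using ab t0 t1 by (intro Gf_le_Kc) auto
  finally show ?thesis .
qed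

definition mu2 :: "'a \<Rightarrow> 'a \<Rightarrow> real \<Rightarrow> 'a \<Rightarrow> real" where
  "mu2 x1 x2 t x = (if x = x1 then t else 0) + (if x = x2 then 1 - t else 0)"

lemma mu2_facts:
  assumes "finite A" "x1 \<in> A" "x2 \<in> A" "0 \<le> t" "t \<le> 1"
  shows "(\<Sum>x\<in>A. mu2 x1 x2 t x * f x) = t * f x1 + (1 - t) * f x2"
    "prob_dist A (mu2 x1 x2 t)"
proof -
  have e: "mu2 x1 x2 t x * f x = (if x = x1 then t * f x else 0) + (if x = x2 then (1 - t) * f x else 0)" for x f
    by (simp add: mu2_def distrib_right)
  show S: "(\<Sum>x\<in>A. mu2 x1 x2 t x * f x) = t * f x1 + (1 - t) * f x2" for f
    unfolding e sum.distrib using assms by (simp add: sum.delta)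
  have "(\<Sum>x\<in>A. mu2 x1 x2 t x) = 1" using S[of "\<lambda>_. 1"] by simp
  moreover have "0 \<le> mu2 x1 x2 t x" for x using assms by (simp add: mu2_def)
  ultimately show "prob_dist A (mu2 x1 x2 t)" by (simp add: prob_dist_def)
qed

lemma cap_bin:
  fixes W :: "'a \<Rightarrow> nat \<Rightarrow> real"
  assumes A: "finite A" and W: "is_channel A {0..<2} W" and x1: "x1 \<in> A" and x2: "x2 \<in> A"
    and mm: "\<forall>x\<in>A. W x1 0 \<le> W x 0 \<and> W x 0 \<le> W x2 0"
  shows "capacity A {0..<2} W = Kc (W x1 0) (W x2 0)"
proof -
  let ?a = "W x1 0" and ?b = "W x2 0"
  have ab: "0 \<le> ?a" "?a \<le> ?b" "?b \<le> 1" using chan_bin[OF W x1] chan_bin[OF W x2] mm x1 by auto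
  let ?S = "{mutual_info A {0..<2} \<mu> W | \<mu>. prob_dist A \<mu>}"
  have le: "y \<le> Kc ?a ?b" if "y \<in> ?S" for y
  proof -
    from that obtain \<mu> where mu: "prob_dist A \<mu>" and y: "y = mutual_info A {0..<2} \<mu> W" by auto
    show ?thesis unfolding y mi_bin[OF A mu W] using gap_le_K[OF A mu ab, of "\<lambda>x. W x 0"] mm by auto
  qed
  have ne: "?S \<noteq> {}" using mu2_facts(2)[OF A x1 x2, of 0] by auto
  have bdd: "bdd_above ?S" using le by (intro bdd_aboveI) auto
  have "capacity A {0..<2} W \<le> Kc ?a ?b" unfolding capacity_def using ne le by (intro cSup_least) auto
  moreover have "Kc ?a ?b \<le> capacity A {0..<2} W"
    unfolding Kc_def
  proof (rule cSup_least)
    fix y assume "y \<in> Gf ?a ?b ` {0..1}"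
    then obtain t where t: "0 \<le> t" "t \<le> 1" and y: "y = Gf ?a ?b t" by auto
    have pd: "prob_dist A (mu2 x1 x2 t)" using mu2_facts(2)[OF A x1 x2 t] .
    have "y = mutual_info A {0..<2} (mu2 x1 x2 t) W"
      unfolding mi_bin[OF A pd W] y Gf_def
      using mu2_facts(1)[OF A x1 x2 t, of "\<lambda>x. W x 0"] mu2_facts(1)[OF A x1 x2 t, of "\<lambda>x. hb (W x 0)"]
      by simp
    then show "y \<le> capacity A {0..<2} W" unfolding capacity_def using pd
      by (intro cSup_upper bdd) auto
  qed auto
  ultimately show ?thesis by simp
qed



lemma Kmono:
  assumes "0 \<le> a" "a \<le> a'" "a' \<le> b'" "b' \<le> b" "b \<le> 1"
  shows "Kc a' b' \<le> Kc a b"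
  unfolding Kc_def[of a' b']
proof (rule cSup_least)
  fix y assume "y \<in> Gf a' b' ` {0..1}"
  then obtain t where t: "0 \<le> t" "t \<le> 1" and y: "y = Gf a' b' t" by auto
  let ?A = "{0::nat, 1}"
  let ?v = "\<lambda>x::nat. if x = 0 then a' else b'"
  have f: "finite ?A" "(0::nat) \<in> ?A" "(1::nat) \<in> ?A" by auto
  have pd: "prob_dist ?A (mu2 0 1 t)" using mu2_facts(2)[OF f t] .
  have "hb (\<Sum>x\<in>?A. mu2 0 1 t x * ?v x) - (\<Sum>x\<in>?A. mu2 0 1 t x * hb (?v x)) \<le> Kc a b"
    using assms by (intro gap_le_K[OF f(1) pd]) auto
  moreover have "hb (\<Sum>x\<in>?A. mu2 0 1 t x * ?v x) - (\<Sum>x\<in>?A. mu2 0 1 t x * hb (?v x)) = y"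
    unfolding y Gf_def using mu2_facts(1)[OF f t, of ?v] mu2_facts(1)[OF f t, of "\<lambda>x. hb (?v x)"] by simp
  ultimately show "y \<le> Kc a b" by simp
qed auto

lemma Ksym:
  shows "Kc a b = Kc (1 - b) (1 - a)"
proof -
  have e: "Gf (1 - b) (1 - a) = Gf a b \<circ> (\<lambda>t. 1 - t)"
  proof (rule ext)
    fix t
    have "t * (1 - b) + (1 - t) * (1 - a) = 1 - ((1 - t) * a + (1 - (1 - t)) * b)" by (simp add: algebra_simps)
    then show "Gf (1 - b) (1 - a) t = (Gf a b \<circ> (\<lambda>t. 1 - t)) t"
      unfolding Gf_def comp_def by (simp add: hb_sym)
  qed
  have i: "(\<lambda>t::real. 1 - t) ` {0..1} = {0..1}"
  proof
    show "{0..1} \<subseteq> (\<lambda>t::real. 1 - t) ` {0..1}"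
    proof
      fix x :: real assume "x \<in> {0..1}"
      then show "x \<in> (\<lambda>t. 1 - t) ` {0..1}" by (intro image_eqI[of _ _ "1 - x"]) auto
    qed
  qed auto
  show ?thesis unfolding Kc_def e image_comp[symmetric] i ..
qed

lemma mi_phi:
  "mutual_info A B \<mu> W = (\<Sum>x\<in>A. \<Sum>b\<in>B. phi (\<mu> x * W x b) (\<mu> x * out_dist A \<mu> W b))"
  unfolding mutual_info_def
proof (rule sum.cong)
  fix x assume "x \<in> A"
  show "(if \<mu> x = 0 then 0 else \<mu> x * KL B (W x) (out_dist A \<mu> W))
      = (\<Sum>b\<in>B. phi (\<mu> x * W x b) (\<mu> x * out_dist A \<mu> W b))"
  proof (cases "\<mu> x = 0")
    case True then show ?thesis by (simp add: phi_def)
  next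
    case False
    have "\<mu> x * KL B (W x) (out_dist A \<mu> W) = (\<Sum>b\<in>B. phi (\<mu> x * W x b) (\<mu> x * out_dist A \<mu> W b))"
      unfolding KL_def sum_distrib_left
      by (rule sum.cong) (use False in \<open>auto simp: phi_def mult_divide_mult_cancel_left\<close>)
    then show ?thesis using False by simp
  qed
qed simp

lemma mi_convex:
  assumes A: "finite A" and mu0: "\<forall>x\<in>A. 0 \<le> \<mu> x"
    and W1: "\<forall>x\<in>A. \<forall>b\<in>B. 0 \<le> W1 x b" and W2: "\<forall>x\<in>A. \<forall>b\<in>B. 0 \<le> W2 x b"
    and th: "0 \<le> th" "th \<le> 1"
  shows "mutual_info A B \<mu> (\<lambda>x b. th * W1 x b + (1 - th) * W2 x b)
         \<le> th * mutual_info A B \<mu> W1 + (1 - th) * mutual_info A B \<mu> W2"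
proof -
  let ?W = "\<lambda>x b. th * W1 x b + (1 - th) * W2 x b"
  have q: "out_dist A \<mu> ?W b = th * out_dist A \<mu> W1 b + (1 - th) * out_dist A \<mu> W2 b" for b
  proof -
    have "out_dist A \<mu> ?W b = (\<Sum>x\<in>A. th * (\<mu> x * W1 x b) + (1 - th) * (\<mu> x * W2 x b))"
      unfolding out_dist_def by (intro sum.cong) (simp_all add: algebra_simps)
    also have "\<dots> = th * out_dist A \<mu> W1 b + (1 - th) * out_dist A \<mu> W2 b"
      unfolding out_dist_def by (simp add: sum.distrib sum_distrib_left)
    finally show ?thesis .
  qed
  have pos: "\<mu> x * out_dist A \<mu> V b > 0"
    if x: "x \<in> A" and b: "b \<in> B" and V: "\<forall>x\<in>A. \<forall>b\<in>B. 0 \<le> V x b" and p: "\<mu> x * V x b > 0" for x b V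
  proof -
    have "\<forall>x\<in>A. 0 \<le> V x b" using V b by auto
    hence "\<mu> x * V x b \<le> out_dist A \<mu> V b" using out_ge[OF A x mu0, of V b] by auto
    moreover have "\<mu> x > 0" using p mu0 x by (auto simp: zero_less_mult_iff)
    ultimately have "out_dist A \<mu> V b > 0" using p by linarith
    then show ?thesis using \<open>\<mu> x > 0\<close> by simp
  qed
  have "mutual_info A B \<mu> ?W = (\<Sum>x\<in>A. \<Sum>b\<in>B. phi (th * (\<mu> x * W1 x b) + (1 - th) * (\<mu> x * W2 x b))
          (th * (\<mu> x * out_dist A \<mu> W1 b) + (1 - th) * (\<mu> x * out_dist A \<mu> W2 b)))"
    unfolding mi_phi q by (simp add: algebra_simps)
  also have "\<dots> \<le> (\<Sum>x\<in>A. \<Sum>b\<in>B. th * phi (\<mu> x * W1 x b) (\<mu> x * out_dist A \<mu> W1 b)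
          + (1 - th) * phi (\<mu> x * W2 x b) (\<mu> x * out_dist A \<mu> W2 b))"
  proof (intro sum_mono phi_conv th)
    fix x b assume x: "x \<in> A" and b: "b \<in> B"
    have od1: "0 \<le> out_dist A \<mu> W1 b" and od2: "0 \<le> out_dist A \<mu> W2 b"
      unfolding out_dist_def using mu0 W1 W2 b by (auto intro!: sum_nonneg)
    show "0 \<le> \<mu> x * W1 x b" "0 \<le> \<mu> x * W2 x b" using mu0 W1 W2 x b by auto
    show "0 \<le> \<mu> x * out_dist A \<mu> W1 b" "0 \<le> \<mu> x * out_dist A \<mu> W2 b" using mu0 x od1 od2 by auto
    show "\<mu> x * W1 x b > 0 \<Longrightarrow> \<mu> x * out_dist A \<mu> W1 b > 0" using pos[OF x b W1] by blast
    show "\<mu> x * W2 x b > 0 \<Longrightarrow> \<mu> x * out_dist A \<mu> W2 b > 0" using pos[OF x b W2] by blast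
  qed
  also have "\<dots> = th * mutual_info A B \<mu> W1 + (1 - th) * mutual_info A B \<mu> W2"
    unfolding mi_phi by (simp add: sum.distrib sum_distrib_left)
  finally show ?thesis .
qed

definition W2c :: "real \<Rightarrow> real \<Rightarrow> nat \<Rightarrow> nat \<Rightarrow> real" where
  "W2c a b x y = (if x = 0 then (if y = 0 then a else 1 - a) else (if y = 0 then b else 1 - b))"

lemma W2c_chan: assumes "0 \<le> a" "a \<le> 1" "0 \<le> b" "b \<le> 1"
  shows "is_channel {0..<2} {0..<2} (W2c a b)"
  using assms by (auto simp: is_channel_def prob_dist_def W2c_def two_set)

lemma G_mi: assumes "0 \<le> a" "a \<le> 1" "0 \<le> b" "b \<le> 1" "0 \<le> t" "t \<le> 1"
  shows "Gf a b t = mutual_info {0..<2} {0..<2} (mu2 0 1 t) (W2c a b)"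
proof -
  have f: "finite {0..<2::nat}" "(0::nat) \<in> {0..<2}" "(1::nat) \<in> {0..<2}" by auto
  have t: "0 \<le> t" "t \<le> 1" using assms by auto
  show ?thesis
    unfolding mi_bin[OF f(1) mu2_facts(2)[OF f t] W2c_chan[OF assms(1-4)]]
      mu2_facts(1)[OF f t] Gf_def by (simp add: W2c_def)
qed

lemma Kconv:
  assumes "0 \<le> a" "0 \<le> b" "a + b \<le> 1"
  shows "Kc a (1 - b) \<le> Kc (a + b) 1"
proof (cases "a + b = 0")
  case True
  hence "a = 0" "b = 0" using assms by auto
  then show ?thesis by simp
next
  case False
  define s where "s = a + b"
  have s: "s > 0" "s \<le> 1" using False assms by (auto simp: s_def)
  define th where "th = a / s"
  have th: "0 \<le> th" "th \<le> 1" using assms s by (auto simp: th_def s_def divide_simps)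
  have ths: "th * s = a" "s * th = a" using s by (simp_all add: th_def)
  have bs: "b = s - a" by (simp add: s_def)
  have Weq: "W2c a (1 - b) = (\<lambda>x y. th * W2c s 1 x y + (1 - th) * W2c 0 (1 - s) x y)"
    unfolding W2c_def bs by (intro ext) (auto simp: algebra_simps ths)
  have K0: "Kc 0 (1 - s) = Kc s 1" using Ksym[of 0 "1 - s"] by simp
  show ?thesis unfolding Kc_def[of a "1 - b"]
  proof (rule cSup_least)
    fix y assume "y \<in> Gf a (1 - b) ` {0..1}"
    then obtain t where t: "0 \<le> t" "t \<le> 1" and y: "y = Gf a (1 - b) t" by auto
    have "y = mutual_info {0..<2} {0..<2} (mu2 0 1 t) (W2c a (1 - b))"
      unfolding y using assms t by (intro G_mi) auto
    also have "\<dots> \<le> th * mutual_info {0..<2} {0..<2} (mu2 0 1 t) (W2c s 1)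
        + (1 - th) * mutual_info {0..<2} {0..<2} (mu2 0 1 t) (W2c 0 (1 - s))"
      unfolding Weq
    proof (rule mi_convex[OF _ _ _ _ th])
      show "\<forall>x\<in>{0..<2}. 0 \<le> mu2 0 1 t x" using t by (auto simp: mu2_def)
      show "\<forall>x\<in>{0..<2}. \<forall>b\<in>{0..<2}. 0 \<le> W2c s 1 x b" using s by (auto simp: W2c_def)
      show "\<forall>x\<in>{0..<2}. \<forall>b\<in>{0..<2}. 0 \<le> W2c 0 (1 - s) x b" using s by (auto simp: W2c_def)
    qed simp
    also have "\<dots> = th * Gf s 1 t + (1 - th) * Gf 0 (1 - s) t"
      using s t by (simp add: G_mi)
    also have "\<dots> \<le> th * Kc s 1 + (1 - th) * Kc 0 (1 - s)"
      using s t th by (intro add_mono mult_left_mono Gf_le_Kc) auto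
    also have "\<dots> = Kc s 1" unfolding K0 by (simp add: algebra_simps)
    also have "Kc s 1 = Kc (a + b) 1" by (simp add: s_def)
    finally show "y \<le> Kc (a + b) 1" .
  qed auto
qed

lemma hb_cont: "continuous_on {0..1} hb"
proof (rule continuous_on_IccI)
  have e: "hb = (\<lambda>v. - (v * (ln v / ln 2) + (1 - v) * (ln (1 - v) / ln 2)))"
    by (rule ext) (simp add: hb_def xl_def log_def)
  show "(hb \<longlongrightarrow> hb 0) (at_right 0)" unfolding e by simp real_asymp
  show "(hb \<longlongrightarrow> hb 1) (at_left 1)" unfolding e by simp real_asymp
  fix x :: real assume x: "0 < x" "x < 1"
  have "isCont hb x" unfolding e using x by (auto intro!: continuous_intros)
  then show "hb \<midarrow>x\<rightarrow> hb x" by (simp add: isCont_def)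
qed simp

lemma Gf_cont: assumes "0 \<le> t" "t \<le> 1"
  shows "continuous_on {0..1} (\<lambda>p. Gf p 1 t)"
proof -
  have c1: "continuous_on {0..1} (\<lambda>p. hb (t * p + (1 - t) * 1))"
  proof (rule continuous_on_compose2[OF hb_cont])
    show "continuous_on {0..1} (\<lambda>p::real. t * p + (1 - t) * 1)" by (intro continuous_intros)
    show "(\<lambda>p. t * p + (1 - t) * 1) ` {0..1} \<subseteq> {0..1}"
    proof
      fix y assume "y \<in> (\<lambda>p. t * p + (1 - t) * 1) ` {0..1}"
      then obtain p where p: "0 \<le> p" "p \<le> 1" and y: "y = t * p + (1 - t) * 1" by auto
      have "t * p \<le> t * 1" using p assms by (intro mult_left_mono) auto
      then show "y \<in> {0..1}" using y p assms by auto
    qed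
  qed
  show ?thesis unfolding Gf_def
    by (intro continuous_intros c1 continuous_on_mult_left hb_cont)
qed



definition cz :: "nat \<Rightarrow> nat \<Rightarrow> nat" where "cz m = (\<lambda>x\<in>{0..<m}. 0)"
definition co :: "nat \<Rightarrow> nat \<Rightarrow> nat" where "co m = (\<lambda>x\<in>{0..<m}. 1)"

lemma dm_iff: "D \<in> det_maps m 2 \<longleftrightarrow> (\<forall>x<m. D x < 2) \<and> (\<forall>x. \<not> x < m \<longrightarrow> D x = undefined)"
  by (auto simp: det_maps_def PiE_iff extensional_def)

lemma fin_dm: "finite (det_maps m n)"
  by (simp add: det_maps_def finite_PiE)

lemma cz_in: "cz m \<in> det_maps m 2" and co_in: "co m \<in> det_maps m 2"
  by (auto simp: dm_iff cz_def co_def)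

lemma cz_ne_co: "m > 0 \<Longrightarrow> cz m \<noteq> co m"
  by (auto simp: cz_def co_def fun_eq_iff)

lemma not_co: assumes "D \<in> det_maps m 2" "D \<noteq> co m" shows "\<exists>x<m. D x = 0"
proof (rule ccontr)
  assume na: "\<not> ?thesis"
  have "\<forall>x<m. D x = 1"
  proof (intro allI impI)
    fix x assume "x < m"
    then have "D x < 2" "D x \<noteq> 0" using assms(1) na by (auto simp: dm_iff)
    then show "D x = 1" by linarith
  qed
  then have "D = co m" using assms(1) by (auto simp: dm_iff co_def fun_eq_iff)
  then show False using assms(2) by simp
qed

lemma not_cz: assumes "D \<in> det_maps m 2" "D \<noteq> cz m" shows "\<exists>x<m. D x = 1"
proof (rule ccontr)
  assume na: "\<not> ?thesis"
  have "\<forall>x<m. D x = 0"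
  proof (intro allI impI)
    fix x assume "x < m"
    then have "D x < 2" "D x \<noteq> 1" using assms(1) na by (auto simp: dm_iff)
    then show "D x = 0" by linarith
  qed
  hence "D = cz m" using assms(1) by (auto simp: dm_iff cz_def fun_eq_iff)
  then show False using assms(2) by simp
qed

lemma sum_minus_one:
  fixes lam :: "'a \<Rightarrow> real"
  assumes "finite S" "c \<in> S"
  shows "(\<Sum>D\<in>S. lam D * (if D = c then 0 else 1)) = sum lam S - lam c"
proof -
  have "(\<Sum>D\<in>S. lam D * (if D = c then 0 else 1)) = (\<Sum>D\<in>S. lam D - (if D = c then lam D else 0))"
    by (rule sum.cong) simp_all
  also have "\<dots> = sum lam S - lam c" using assms by (simp add: sum_subtractf sum.delta)
  finally show ?thesis .
qed

lemma V_bounds: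
  assumes pd: "prob_dist (det_maps m 2) lam" and g: "\<forall>D\<in>det_maps m 2. g D < m"
  shows "lam (cz m) \<le> (\<Sum>D\<in>det_maps m 2. lam D * det_entry D (g D) 0)"
    "(\<Sum>D\<in>det_maps m 2. lam D * det_entry D (g D) 0) \<le> 1 - lam (co m)"
proof -
  have l0: "\<forall>D\<in>det_maps m 2. 0 \<le> lam D" and l1: "sum lam (det_maps m 2) = 1"
    using pd by (auto simp: prob_dist_def)
  have "lam (cz m) * det_entry (cz m) (g (cz m)) 0 \<le> (\<Sum>D\<in>det_maps m 2. lam D * det_entry D (g D) 0)"
    using l0 by (intro member_le_sum cz_in fin_dm) (auto simp: det_entry_def)
  moreover have "det_entry (cz m) (g (cz m)) 0 = 1" using g cz_in by (auto simp: det_entry_def cz_def)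
  ultimately show "lam (cz m) \<le> (\<Sum>D\<in>det_maps m 2. lam D * det_entry D (g D) 0)" by simp
  have "(\<Sum>D\<in>det_maps m 2. lam D * det_entry D (g D) 0) \<le> (\<Sum>D\<in>det_maps m 2. lam D * (if D = co m then 0 else 1))"
  proof (rule sum_mono)
    fix D assume D: "D \<in> det_maps m 2"
    have "det_entry D (g D) 0 \<le> (if D = co m then 0 else 1)"
      using g D by (auto simp: det_entry_def co_def)
    then show "lam D * det_entry D (g D) 0 \<le> lam D * (if D = co m then 0 else 1)"
      using l0 D by (intro mult_left_mono) auto
  qed
  also have "\<dots> = 1 - lam (co m)" unfolding sum_minus_one[OF fin_dm co_in] l1 ..
  finally show "(\<Sum>D\<in>det_maps m 2. lam D * det_entry D (g D) 0) \<le> 1 - lam (co m)" .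
qed

lemma V_max:
  assumes pd: "prob_dist (det_maps m 2) lam"
    and g: "\<forall>D\<in>det_maps m 2. D \<noteq> co m \<longrightarrow> D (g D) = 0" "\<forall>D\<in>det_maps m 2. g D < m"
  shows "(\<Sum>D\<in>det_maps m 2. lam D * det_entry D (g D) 0) = 1 - lam (co m)"
proof -
  have l1: "sum lam (det_maps m 2) = 1" using pd by (auto simp: prob_dist_def)
  have "(\<Sum>D\<in>det_maps m 2. lam D * det_entry D (g D) 0) = (\<Sum>D\<in>det_maps m 2. lam D * (if D = co m then 0 else 1))"
    using g by (intro sum.cong) (auto simp: det_entry_def co_def)
  also have "\<dots> = 1 - lam (co m)" unfolding sum_minus_one[OF fin_dm co_in] l1 ..
  finally show ?thesis .
qed

lemma V_min:
  assumes g: "\<forall>D\<in>det_maps m 2. D \<noteq> cz m \<longrightarrow> D (g D) = 1" "\<forall>D\<in>det_maps m 2. g D < m"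
  shows "(\<Sum>D\<in>det_maps m 2. lam D * det_entry D (g D) 0) = lam (cz m)"
proof -
  have "(\<Sum>D\<in>det_maps m 2. lam D * det_entry D (g D) 0) = (\<Sum>D\<in>det_maps m 2. if D = cz m then lam D else 0)"
    using g by (intro sum.cong) (auto simp: det_entry_def cz_def)
  also have "\<dots> = lam (cz m)" using cz_in by (simp add: sum.delta fin_dm)
  finally show ?thesis .
qed

definition gmax :: "nat \<Rightarrow> (nat \<Rightarrow> nat) \<Rightarrow> nat" where
  "gmax m D = (if \<exists>x<m. D x = 0 then (SOME x. x < m \<and> D x = 0) else 0)"
definition gmin :: "nat \<Rightarrow> (nat \<Rightarrow> nat) \<Rightarrow> nat" where
  "gmin m D = (if \<exists>x<m. D x = 1 then (SOME x. x < m \<and> D x = 1) else 0)"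

lemma gmax_props: assumes "m > 0"
  shows "gmax m D < m" "D \<in> det_maps m 2 \<Longrightarrow> D \<noteq> co m \<Longrightarrow> D (gmax m D) = 0"
proof -
  show "gmax m D < m"
    using someI_ex[of "\<lambda>x. x < m \<and> D x = 0"] assms by (auto simp: gmax_def)
  assume "D \<in> det_maps m 2" "D \<noteq> co m"
  hence e: "\<exists>x<m. D x = 0" by (rule not_co)
  then show "D (gmax m D) = 0" unfolding gmax_def using someI_ex[OF e] by auto
qed

lemma gmin_props: assumes "m > 0"
  shows "gmin m D < m" "D \<in> det_maps m 2 \<Longrightarrow> D \<noteq> cz m \<Longrightarrow> D (gmin m D) = 1"
proof -
  show "gmin m D < m"
    using someI_ex[of "\<lambda>x. x < m \<and> D x = 1"] assms by (auto simp: gmin_def)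
  assume "D \<in> det_maps m 2" "D \<noteq> cz m"
  hence e: "\<exists>x<m. D x = 1" by (rule not_cz)
  then show "D (gmin m D) = 1" unfolding gmin_def using someI_ex[OF e] by auto
qed

lemma C10_val:
  assumes m: "m > 0" and pd: "prob_dist (det_maps m 2) lam"
  shows "C10 m 2 lam = Kc (lam (cz m)) (1 - lam (co m))"
proof -
  have l0: "\<forall>D\<in>det_maps m 2. 0 \<le> lam D" and l1: "sum lam (det_maps m 2) = 1"
    using pd by (auto simp: prob_dist_def)
  have fin: "finite (strategies m 2)" unfolding strategies_def by (simp add: finite_PiE fin_dm)
  have ust: "u D < m" if "u \<in> strategies m 2" "D \<in> det_maps m 2" for u D
    using that by (auto simp: strategies_def PiE_iff)
  have chan: "is_channel (strategies m 2) {0..<2} (V_chan m 2 lam)"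
    unfolding is_channel_def prob_dist_def
  proof (rule ballI, rule conjI)
    fix u assume u: "u \<in> strategies m 2"
    show "\<forall>y\<in>{0..<2}. 0 \<le> V_chan m 2 lam u y"
      using l0 by (auto simp: V_chan_def det_entry_def intro!: sum_nonneg)
    have "sum (V_chan m 2 lam u) {0..<2} = (\<Sum>D\<in>det_maps m 2. lam D * det_entry D (u D) 0 + lam D * det_entry D (u D) 1)"
      by (simp add: two_set V_chan_def sum.distrib)
    also have "\<dots> = (\<Sum>D\<in>det_maps m 2. lam D)"
    proof (rule sum.cong)
      fix D assume D: "D \<in> det_maps m 2"
      have "D (u D) < 2" using ust[OF u D] D by (auto simp: dm_iff)
      then show "lam D * det_entry D (u D) 0 + lam D * det_entry D (u D) 1 = lam D"
        by (auto simp: det_entry_def less_2_cases_iff)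
    qed simp
    finally show "sum (V_chan m 2 lam u) {0..<2} = 1" using l1 by simp
  qed
  define umax where "umax = restrict (gmax m) (det_maps m 2)"
  define umin where "umin = restrict (gmin m) (det_maps m 2)"
  have umax: "umax \<in> strategies m 2" unfolding umax_def strategies_def
    using gmax_props(1)[OF m] by (auto simp: restrict_PiE_iff)
  have umin: "umin \<in> strategies m 2" unfolding umin_def strategies_def
    using gmin_props(1)[OF m] by (auto simp: restrict_PiE_iff)
  have Vmax: "V_chan m 2 lam umax 0 = 1 - lam (co m)"
  proof -
    have "V_chan m 2 lam umax 0 = (\<Sum>D\<in>det_maps m 2. lam D * det_entry D (gmax m D) 0)"
      unfolding V_chan_def umax_def by (intro sum.cong) auto
    also have "\<dots> = 1 - lam (co m)" using gmax_props[OF m] by (intro V_max pd) auto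
    finally show ?thesis .
  qed
  have Vmin: "V_chan m 2 lam umin 0 = lam (cz m)"
  proof -
    have "V_chan m 2 lam umin 0 = (\<Sum>D\<in>det_maps m 2. lam D * det_entry D (gmin m D) 0)"
      unfolding V_chan_def umin_def by (intro sum.cong) auto
    also have "\<dots> = lam (cz m)" using gmin_props[OF m] by (intro V_min) auto
    finally show ?thesis .
  qed
  have bnd: "\<forall>u\<in>strategies m 2. V_chan m 2 lam umin 0 \<le> V_chan m 2 lam u 0 \<and> V_chan m 2 lam u 0 \<le> V_chan m 2 lam umax 0"
  proof
    fix u assume u: "u \<in> strategies m 2"
    have g: "\<forall>D\<in>det_maps m 2. u D < m" using ust[OF u] by blast
    show "V_chan m 2 lam umin 0 \<le> V_chan m 2 lam u 0 \<and> V_chan m 2 lam u 0 \<le> V_chan m 2 lam umax 0"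
      unfolding Vmax Vmin unfolding V_chan_def using V_bounds[OF pd g] by simp
  qed
  show ?thesis unfolding C10_def cap_bin[OF fin chan umin umax bnd] Vmax Vmin ..
qed



lemma (in vec_space) lin_indpt_sep:
  assumes U: "U \<subseteq> carrier_vec n"
    and sep: "\<And>v. v \<in> U \<Longrightarrow> \<exists>i<n. v $ i \<noteq> 0 \<and> (\<forall>u\<in>U. u \<noteq> v \<longrightarrow> u $ i = 0)"
  shows "lin_indpt U"
proof
  assume "lin_dep U"
  then obtain A a v where A: "finite A" "A \<subseteq> U" and lc: "lincomb a A = 0\<^sub>v n"
    and v: "v \<in> A" "a v \<noteq> 0"
    unfolding lin_dep_def by blast
  obtain i where i: "i < n" "v $ i \<noteq> 0" "\<forall>u\<in>U. u \<noteq> v \<longrightarrow> u $ i = 0" using sep A v by blast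
  have "lincomb a A $ i = (\<Sum>x\<in>A. a x * x $ i)" using lincomb_index[OF i(1)] A U by blast
  also have "\<dots> = (\<Sum>x\<in>A. if x = v then a v * v $ i else 0)"
    using i A by (intro sum.cong) auto
  also have "\<dots> = a v * v $ i" using A v by simp
  finally have "a v * v $ i = 0" using lc i by simp
  then show False using v i by simp
qed

lemma rank_char:
  assumes m: "m > 0" and D: "D \<in> det_maps m 2"
  shows "det_rank m 2 D = 1 \<longleftrightarrow> D = cz m \<or> D = co m"
proof -
  define A where "A = det_matrix m 2 D"
  have Ac: "A \<in> carrier_mat m 2" by (simp add: A_def det_matrix_def)
  have Ae: "A $$ (r, c) = det_entry D r c" if "r < m" "c < 2" for r c
    using that by (simp add: A_def det_matrix_def)
  have colc: "col A j \<in> carrier_vec m" for j using Ac by auto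
  have cole: "col A j $ i = det_entry D i j" if "i < m" "j < 2" for i j
    using that Ac Ae by (simp add: index_col)
  have cols: "set (cols A) = {col A 0, col A 1}" using Ac by (auto simp: cols_def less_2_cases_iff)
  have rk: "det_rank m 2 D = vec_space.rank m A" by (simp add: det_rank_def A_def)
  have prod: "vec_space.rank m A \<le> 1" if c: "\<forall>x<m. D x = y0" for y0
  proof (rule vec_space.rank_le_1_product_entries[OF Ac, of "\<lambda>_. 1" "\<lambda>c. if c = y0 then 1 else 0"])
    fix r c assume "r < dim_row A" "c < dim_col A"
    then show "A $$ (r, c) = 1 * (if c = y0 then 1 else 0)" using Ac Ae c by (auto simp: det_entry_def)
  qed
  have ge1: "vec_space.rank m A \<ge> 1" if c: "\<forall>x<m. D x = y0" "y0 < 2" for y0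
  proof -
    have "card {col A y0} \<le> vec_space.rank m A"
    proof (rule vec_space.rank_ge_card_indpt[OF Ac])
      show "{col A y0} \<subseteq> set (cols A)" using cols c(2) by (auto simp: less_2_cases_iff)
      show "\<not> module.lin_dep class_ring (module_vec TYPE(real) m) {col A y0}"
        by (rule vec_space.lin_indpt_sep) (use colc cole c m in \<open>auto simp: det_entry_def\<close>)
    qed
    then show ?thesis by simp
  qed
  show ?thesis
  proof (cases "D = cz m \<or> D = co m")
    case True
    have "\<exists>y0. (\<forall>x<m. D x = y0) \<and> y0 < (2::nat)"
    proof (cases "D = cz m")
      case True then show ?thesis by (intro exI[of _ 0]) (auto simp: cz_def)
    next
      case False then have "D = co m" using \<open>D = cz m \<or> D = co m\<close> by simp
      then show ?thesis by (intro exI[of _ 1]) (auto simp: co_def)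
    qed
    then obtain y0 where y0: "\<forall>x<m. D x = y0" "y0 < 2" by blast
    show ?thesis using prod[OF y0(1)] ge1[OF y0] True rk by simp
  next
    case False
    obtain x0 where x0: "x0 < m" "D x0 = 0" using not_co[OF D] False by blast
    obtain x1 where x1: "x1 < m" "D x1 = 1" using not_cz[OF D] False by blast
    have ne: "col A 0 \<noteq> col A 1" using cole[of x0 0] cole[of x0 1] x0 by (auto simp: det_entry_def)
    have "card {col A 0, col A 1} \<le> vec_space.rank m A"
    proof (rule vec_space.rank_ge_card_indpt[OF Ac])
      show "{col A 0, col A 1} \<subseteq> set (cols A)" using cols by auto
      show "\<not> module.lin_dep class_ring (module_vec TYPE(real) m) {col A 0, col A 1}"
      proof (rule vec_space.lin_indpt_sep)
        show "{col A 0, col A 1} \<subseteq> carrier_vec m" using colc by auto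
        fix v assume "v \<in> {col A 0, col A 1}"
        then show "\<exists>i<m. v $ i \<noteq> 0 \<and> (\<forall>u\<in>{col A 0, col A 1}. u \<noteq> v \<longrightarrow> u $ i = 0)"
        proof
          assume v: "v = col A 0"
          show ?thesis using x0 cole[of x0 0] cole[of x0 1] ne v by (intro exI[of _ x0]) (auto simp: det_entry_def)
        next
          assume "v \<in> {col A 1}"
          hence v: "v = col A 1" by simp
          show ?thesis using x1 cole[of x1 0] cole[of x1 1] ne v by (intro exI[of _ x1]) (auto simp: det_entry_def)
        qed
      qed
    qed
    then have "vec_space.rank m A \<ge> 2" using ne by simp
    then show ?thesis using False rk by simp
  qed
qed



lemma restr_eq_iff: "((\<lambda>x\<in>S. g x) = (\<lambda>x\<in>S. h x)) \<longleftrightarrow> (\<forall>x\<in>S. g x = h x)"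
  by (metis restrict_apply' restrict_ext)

lemma sum_compl_filter:
  fixes r :: "'a \<Rightarrow> real"
  assumes "finite I"
  shows "sum r {i\<in>I. \<not> P i} = sum r I - sum r {i\<in>I. P i}"
proof -
  have "sum r {i\<in>I. \<not> P i} = (\<Sum>i\<in>I. r i - (if P i then r i else 0))"
    using assms by (simp add: sum.inter_filter) (intro sum.cong, auto)
  also have "\<dots> = sum r I - sum r {i\<in>I. P i}" using assms by (simp add: sum_subtractf sum.inter_filter)
  finally show ?thesis .
qed

lemma mix_lam:
  assumes I: "finite I" and r0: "\<forall>i\<in>I. 0 \<le> (r i :: real)" and r1: "sum r I = 1"
    and f: "\<forall>i\<in>I. f i \<in> det_maps m 2"
  shows "prob_dist (det_maps m 2) (\<lambda>D. sum r {i\<in>I. f i = D})"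
    "(\<Sum>D\<in>det_maps m 2. sum r {i\<in>I. f i = D} * det_entry D x y) = (\<Sum>i\<in>I. r i * det_entry (f i) x y)"
proof -
  have fI: "f ` I \<subseteq> det_maps m 2" using f by auto
  show "prob_dist (det_maps m 2) (\<lambda>D. sum r {i\<in>I. f i = D})"
    unfolding prob_dist_def using sum.group[OF I fin_dm fI, of r] r1 r0
    by (auto intro!: sum_nonneg)
  have "(\<Sum>D\<in>det_maps m 2. sum r {i\<in>I. f i = D} * det_entry D x y)
      = (\<Sum>D\<in>det_maps m 2. \<Sum>i\<in>{i\<in>I. f i = D}. r i * det_entry (f i) x y)"
    by (intro sum.cong refl) (simp add: sum_distrib_right)
  also have "\<dots> = (\<Sum>i\<in>I. r i * det_entry (f i) x y)" by (rule sum.group[OF I fin_dm fI])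
  finally show "(\<Sum>D\<in>det_maps m 2. sum r {i\<in>I. f i = D} * det_entry D x y) = (\<Sum>i\<in>I. r i * det_entry (f i) x y)" .
qed

lemma ts_sum:
  fixes ts :: "real list"
  assumes s: "sorted_wrt (<) ts" and j: "j < length ts"
  shows "sum (\<lambda>i. ts ! Suc i - ts ! i) {i\<in>{..<length ts - 1}. ts ! i < ts ! j} = ts ! j - ts ! 0"
proof -
  have "{i\<in>{..<length ts - 1}. ts ! i < ts ! j} = {..<j}"
  proof (rule Set.set_eqI, rule iffI)
    fix i assume "i \<in> {i\<in>{..<length ts - 1}. ts ! i < ts ! j}"
    hence i: "i < length ts - 1" "ts ! i < ts ! j" by auto
    show "i \<in> {..<j}"
    proof (rule ccontr)
      assume "i \<notin> {..<j}"
      hence "j \<le> i" by simp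
      have "ts ! j \<le> ts ! i"
      proof (cases "j = i")
        case False
        hence "j < i" "i < length ts" using \<open>j \<le> i\<close> i(1) by auto
        from sorted_wrt_nth_less[OF s this] show ?thesis by simp
      qed simp
      then show False using i(2) by simp
    qed
  next
    fix i assume "i \<in> {..<j}"
    then show "i \<in> {i\<in>{..<length ts - 1}. ts ! i < ts ! j}" using j s
      by (auto intro: sorted_wrt_nth_less)
  qed
  then show ?thesis by (simp add: sum_lessThan_telescope)
qed

lemma thresh_exists:
  fixes W :: "nat \<Rightarrow> nat \<Rightarrow> real"
  assumes m: "m > 0" and W: "is_channel {0..<m} {0..<2} W" and x12: "x1 < m" "x2 < m"
    and mm: "\<forall>x<m. W x1 0 \<le> W x 0 \<and> W x 0 \<le> W x2 0"
  shows "\<exists>lam\<in>Lambda m 2 W. lam (cz m) = W x1 0 \<and> lam (co m) = 1 - W x2 0"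
proof -
  define w where "w x = W x 0" for x
  have w01: "0 \<le> w x \<and> w x \<le> 1" if "x < m" for x using chan_bin[OF W] that by (auto simp: w_def)
  define T where "T = insert 0 (insert 1 (w ` {0..<m}))"
  have finT: "finite T" by (simp add: T_def)
  have T01: "\<forall>z\<in>T. 0 \<le> z \<and> z \<le> 1" using w01 by (auto simp: T_def)
  define ts where "ts = sorted_list_of_set T"
  define L where "L = length ts"
  have setts: "set ts = T" using finT by (simp add: ts_def)
  have sts: "sorted_wrt (<) ts" by (simp add: ts_def)
  have sts': "sorted ts" by (simp add: ts_def)
  have inT: "\<exists>k<L. ts ! k = z" if "z \<in> T" for z
    using that setts by (auto simp: L_def in_set_conv_nth)
  have tsT: "ts ! k \<in> T" if "k < L" for k using that setts by (auto simp: L_def)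
  have L0: "L > 0" using inT[of 0] by (auto simp: T_def)
  have ts0: "ts ! 0 = 0"
  proof -
    obtain k where k: "k < L" "ts ! k = 0" using inT[of 0] by (auto simp: T_def)
    have "ts ! 0 \<le> ts ! k" using sorted_nth_mono[OF sts', of 0 k] k by (simp add: L_def)
    moreover have "ts ! 0 \<ge> 0" using tsT[of 0] L0 T01 by auto
    ultimately show ?thesis using k by simp
  qed
  have tsL: "ts ! (L - 1) = 1"
  proof -
    obtain k where k: "k < L" "ts ! k = 1" using inT[of 1] by (auto simp: T_def)
    have "ts ! k \<le> ts ! (L - 1)" using sorted_nth_mono[OF sts', of k "L - 1"] k by (simp add: L_def)
    moreover have "ts ! (L - 1) \<le> 1" using tsT[of "L - 1"] L0 T01 by auto
    ultimately show ?thesis using k by simp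
  qed
  define I where "I = {..<L - 1}"
  define r where "r i = ts ! Suc i - ts ! i" for i
  have key: "sum r {i\<in>I. ts ! i < z} = z" if zT: "z \<in> T" for z
  proof -
    obtain j where j: "j < L" "ts ! j = z" using inT[OF zT] by blast
    show ?thesis using ts_sum[OF sts, of j] j ts0 by (simp add: I_def r_def L_def)
  qed
  have r0: "\<forall>i\<in>I. 0 \<le> r i"
  proof
    fix i assume "i \<in> I"
    hence "i < Suc i" "Suc i < length ts" by (auto simp: I_def L_def)
    from sorted_wrt_nth_less[OF sts this] show "0 \<le> r i" by (simp add: r_def)
  qed
  have r1: "sum r I = 1"
    unfolding I_def r_def using sum_lessThan_telescope[of "\<lambda>i. ts ! i" "L - 1"] ts0 tsL by simp
  define f where "f i = (\<lambda>x\<in>{0..<m}. if ts ! i < w x then 0 else (1::nat))" for i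
  have fin: "\<forall>i\<in>I. f i \<in> det_maps m 2" by (auto simp: f_def dm_iff)
  have finI: "finite I" by (simp add: I_def)
  define lam where "lam D = sum r {i\<in>I. f i = D}" for D
  have pd: "prob_dist (det_maps m 2) lam" unfolding lam_def by (rule mix_lam(1)[OF finI r0 r1 fin])
  have marg: "(\<Sum>D\<in>det_maps m 2. lam D * det_entry D x y) = (\<Sum>i\<in>I. r i * det_entry (f i) x y)" for x y
    unfolding lam_def by (rule mix_lam(2)[OF finI r0 r1 fin])
  have wT: "w x \<in> T" if "x < m" for x using that by (auto simp: T_def)
  have Lam: "lam \<in> Lambda m 2 W"
    unfolding Lambda_def
  proof (intro CollectI conjI pd ballI)
    fix x y assume x: "x \<in> {0..<m}" and y: "y \<in> {0..<2::nat}"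
    have x': "x < m" using x by simp
    have s0: "(\<Sum>i\<in>I. r i * det_entry (f i) x 0) = w x"
    proof -
      have "(\<Sum>i\<in>I. r i * det_entry (f i) x 0) = (\<Sum>i\<in>I. if ts ! i < w x then r i else 0)"
        using x' by (intro sum.cong) (auto simp: det_entry_def f_def)
      also have "\<dots> = w x" using key[OF wT[OF x']] finI by (simp add: sum.inter_filter)
      finally show ?thesis .
    qed
    have s1: "(\<Sum>i\<in>I. r i * det_entry (f i) x 1) = 1 - w x"
    proof -
      have "(\<Sum>i\<in>I. r i * det_entry (f i) x 1) = (\<Sum>i\<in>I. r i - r i * det_entry (f i) x 0)"
        using x' by (intro sum.cong) (auto simp: det_entry_def f_def)
      also have "\<dots> = 1 - w x" using s0 r1 by (simp add: sum_subtractf)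
      finally show ?thesis .
    qed
    show "W x y = (\<Sum>D\<in>det_maps m 2. lam D * det_entry D x y)"
      unfolding marg using y s0 s1 chan_bin(1)[OF W x] by (auto simp: w_def less_2_cases_iff)
  qed
  have fcz: "f i = cz m \<longleftrightarrow> ts ! i < w x1" for i
  proof -
    have "f i = cz m \<longleftrightarrow> (\<forall>x\<in>{0..<m}. ts ! i < w x)"
      unfolding f_def cz_def restr_eq_iff by auto
    also have "\<dots> \<longleftrightarrow> ts ! i < w x1" using mm x12 by (auto simp: w_def intro: less_le_trans)
    finally show ?thesis .
  qed
  have fco: "f i = co m \<longleftrightarrow> \<not> ts ! i < w x2" for i
  proof -
    have "f i = co m \<longleftrightarrow> (\<forall>x\<in>{0..<m}. \<not> ts ! i < w x)"
      unfolding f_def co_def restr_eq_iff by auto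
    also have "\<dots> \<longleftrightarrow> \<not> ts ! i < w x2" using mm x12 by (auto simp: w_def intro: le_less_trans)
    finally show ?thesis .
  qed
  have "lam (cz m) = W x1 0" unfolding lam_def fcz using key[OF wT[OF x12(1)]] by (simp add: w_def)
  moreover have "lam (co m) = 1 - W x2 0" unfolding lam_def fco sum_compl_filter[OF finI]
    using key[OF wT[OF x12(2)]] r1 by (simp add: w_def)
  ultimately show ?thesis using Lam by blast
qed



lemma neq_at: "f a \<noteq> g a \<Longrightarrow> f \<noteq> g" by auto

lemma Lambda_D:
  assumes "lam \<in> Lambda m 2 W"
  shows "prob_dist (det_maps m 2) lam"
    "\<And>x y. x < m \<Longrightarrow> y < 2 \<Longrightarrow> W x y = (\<Sum>D\<in>det_maps m 2. lam D * det_entry D x y)"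
  using assms by (auto simp: Lambda_def)

lemma reduce:
  assumes m: "m \<ge> 2" and lam: "lam \<in> Lambda m 2 W"
  shows "\<exists>lam'\<in>Lambda m 2 W. (lam' (cz m) = 0 \<or> lam' (co m) = 0)
           \<and> lam' (cz m) + lam' (co m) \<le> lam (cz m) + lam (co m)"
proof -
  define D1 where "D1 = (\<lambda>x\<in>{0..<m}. if x = 0 then 0 else (1::nat))"
  define D2 where "D2 = (\<lambda>x\<in>{0..<m}. if x = 0 then 1 else (0::nat))"
  have v: "D1 0 = 0" "D1 1 = 1" "D2 0 = 1" "D2 1 = 0" "cz m 0 = 0" "cz m 1 = 0" "co m 0 = 1" "co m 1 = 1"
    using m by (auto simp: D1_def D2_def cz_def co_def)
  have d: "D1 \<noteq> cz m" "D1 \<noteq> co m" "D2 \<noteq> cz m" "D2 \<noteq> co m" "D1 \<noteq> D2" "cz m \<noteq> co m"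
    using v by (metis zero_neq_one)+
  have d': "cz m \<noteq> D1" "co m \<noteq> D1" "cz m \<noteq> D2" "co m \<noteq> D2" "D2 \<noteq> D1" "co m \<noteq> cz m"
    using d by auto
  have D12: "D1 \<in> det_maps m 2" "D2 \<in> det_maps m 2" by (auto simp: dm_iff D1_def D2_def)
  have pd: "prob_dist (det_maps m 2) lam" and eq: "\<And>x y. x < m \<Longrightarrow> y < 2 \<Longrightarrow> W x y = (\<Sum>D\<in>det_maps m 2. lam D * det_entry D x y)"
    using Lambda_D[OF lam] by auto
  have l0: "\<forall>D\<in>det_maps m 2. 0 \<le> lam D" and l1: "sum lam (det_maps m 2) = 1"
    using pd by (auto simp: prob_dist_def)
  define e where "e = min (lam (cz m)) (lam (co m))"
  have e0: "0 \<le> e" "e \<le> lam (cz m)" "e \<le> lam (co m)" using l0 cz_in co_in by (auto simp: e_def)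
  define ind where "ind X D = (if D = X then 1 else (0::real))" for X D :: "nat \<Rightarrow> nat"
  define lam' where "lam' D = lam D + e * (ind D1 D + ind D2 D - ind (cz m) D - ind (co m) D)" for D
  have vcz: "lam' (cz m) = lam (cz m) - e" using d' by (simp add: lam'_def ind_def)
  have vco: "lam' (co m) = lam (co m) - e" using d' by (simp add: lam'_def ind_def)
  have sind: "(\<Sum>D\<in>det_maps m 2. ind X D * g D) = g X" if "X \<in> det_maps m 2" for X g
  proof -
    have "(\<Sum>D\<in>det_maps m 2. ind X D * g D) = (\<Sum>D\<in>det_maps m 2. if D = X then g D else 0)"
      by (intro sum.cong) (auto simp: ind_def)
    then show ?thesis using that by (simp add: fin_dm)
  qed
  have lsum: "(\<Sum>D\<in>det_maps m 2. lam' D * g D) = (\<Sum>D\<in>det_maps m 2. lam D * g D)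
      + e * (g D1 + g D2 - g (cz m) - g (co m))" for g
  proof -
    have "(\<Sum>D\<in>det_maps m 2. lam' D * g D) = (\<Sum>D\<in>det_maps m 2. lam D * g D
        + e * (ind D1 D * g D + ind D2 D * g D - ind (cz m) D * g D - ind (co m) D * g D))"
      by (intro sum.cong) (simp_all add: lam'_def algebra_simps)
    also have "\<dots> = (\<Sum>D\<in>det_maps m 2. lam D * g D) + e * (g D1 + g D2 - g (cz m) - g (co m))"
      by (simp add: sum.distrib sum_subtractf sum_distrib_left[symmetric] sind D12 cz_in co_in)
    finally show ?thesis .
  qed
  have Lam': "lam' \<in> Lambda m 2 W"
    unfolding Lambda_def prob_dist_def
  proof (intro CollectI conjI ballI)
    fix D assume D: "D \<in> det_maps m 2"
    show "0 \<le> lam' D"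
      using l0 D e0 d d' by (auto simp: lam'_def ind_def)
  next
    show "sum lam' (det_maps m 2) = 1" using lsum[of "\<lambda>_. 1"] l1 by simp
  next
    fix x y assume x: "x \<in> {0..<m}" and y: "y \<in> {0..<2::nat}"
    have "det_entry D1 x y + det_entry D2 x y - det_entry (cz m) x y - det_entry (co m) x y = 0"
      using x y by (auto simp: det_entry_def D1_def D2_def cz_def co_def less_2_cases_iff)
    then show "W x y = (\<Sum>D\<in>det_maps m 2. lam' D * det_entry D x y)"
      using lsum[of "\<lambda>D. det_entry D x y"] eq x y by simp
  qed
  have z: "lam' (cz m) = 0 \<or> lam' (co m) = 0" unfolding vcz vco e_def
    by (cases "lam (cz m) \<le> lam (co m)") (simp_all add: min_def)
  have s: "lam' (cz m) + lam' (co m) \<le> lam (cz m) + lam (co m)" unfolding vcz vco using e0 by simp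
  show ?thesis
  proof (rule bexI[OF _ Lam'])
    show "(lam' (cz m) = 0 \<or> lam' (co m) = 0) \<and> lam' (cz m) + lam' (co m) \<le> lam (cz m) + lam (co m)"
      using z s by simp
  qed
qed



theorem theorem3:
  fixes m :: nat and W :: "nat \<Rightarrow> nat \<Rightarrow> real"
  assumes "m \<ge> 2"
    and "is_channel {0..<m} {0..<2} W"
  shows "lower_C10 m 2 W = capacity {0..<m} {0..<2} W
       \<and> upper_C10 m 2 W = capacity {0..<2} {0..<2} (Z_chan (lower_P1 m 2 W))"
proof -
  note m2 = assms(1) and W = assms(2)
  have m: "m > 0" using m2 by simp
  let ?A = "{0..<m}"
  let ?w = "\<lambda>x. W x 0"
  have finA: "finite ?A" and neA: "?A \<noteq> {}" using m by auto
  have "Min (?w ` ?A) \<in> ?w ` ?A" using finA neA by (intro Min_in) auto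
  then obtain x1 where x1: "x1 \<in> ?A" "?w x1 = Min (?w ` ?A)" by (metis (no_types, lifting) imageE)
  have "Max (?w ` ?A) \<in> ?w ` ?A" using finA neA by (intro Max_in) auto
  then obtain x2 where x2: "x2 \<in> ?A" "?w x2 = Max (?w ` ?A)" by (metis (no_types, lifting) imageE)
  have mm: "\<forall>x\<in>?A. W x1 0 \<le> W x 0 \<and> W x 0 \<le> W x2 0"
    using x1 x2 finA by auto
  have mm': "\<forall>x<m. W x1 0 \<le> W x 0 \<and> W x 0 \<le> W x2 0" using mm by auto
  have x12: "x1 < m" "x2 < m" using x1 x2 by auto
  have CW: "capacity ?A {0..<2} W = Kc (W x1 0) (W x2 0)"
    by (rule cap_bin[OF finA W x1(1) x2(1) mm])
  have a01: "0 \<le> W x1 0" "W x1 0 \<le> W x2 0" "W x2 0 \<le> 1"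
    using chan_bin[OF W x1(1)] chan_bin[OF W x2(1)] mm x1(1) by auto
  obtain lam0 where lam0: "lam0 \<in> Lambda m 2 W" "lam0 (cz m) = W x1 0" "lam0 (co m) = 1 - W x2 0"
    using thresh_exists[OF m W x12 mm'] by blast
  let ?L = "Lambda m 2 W"
  have neL: "?L \<noteq> {}" using lam0 by auto
  have pdL: "prob_dist (det_maps m 2) lam" if "lam \<in> ?L" for lam using Lambda_D[OF that] by simp
  have C10v: "C10 m 2 lam = Kc (lam (cz m)) (1 - lam (co m))" if "lam \<in> ?L" for lam
    using C10_val[OF m pdL[OF that]] .
  have l0: "0 \<le> lam (cz m)" "0 \<le> lam (co m)" if "lam \<in> ?L" for lam
    using pdL[OF that] cz_in co_in by (auto simp: prob_dist_def)
  have lsum: "lam (cz m) + lam (co m) \<le> 1" if "lam \<in> ?L" for lam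
  proof -
    have "sum lam {cz m, co m} \<le> sum lam (det_maps m 2)"
      using pdL[OF that] cz_in co_in by (intro sum_mono2 fin_dm) (auto simp: prob_dist_def)
    then show ?thesis using pdL[OF that] cz_ne_co[OF m] by (simp add: prob_dist_def)
  qed
  have lb: "lam (cz m) \<le> W x 0" "W x 0 \<le> 1 - lam (co m)" if "lam \<in> ?L" "x < m" for lam x
  proof -
    have e: "W x 0 = (\<Sum>D\<in>det_maps m 2. lam D * det_entry D ((\<lambda>D. x) D) 0)"
      using Lambda_D(2)[OF that(1) that(2)] by simp
    show "lam (cz m) \<le> W x 0" "W x 0 \<le> 1 - lam (co m)"
      unfolding e using V_bounds[OF pdL[OF that(1)], of "\<lambda>D. x"] that(2) by auto
  qed
  have lower: "lower_C10 m 2 W = capacity ?A {0..<2} W"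
    unfolding lower_C10_def CW
  proof (rule cInf_eq_minimum)
    show "Kc (W x1 0) (W x2 0) \<in> C10 m 2 ` ?L"
      using C10v[OF lam0(1)] lam0 by (intro image_eqI[OF _ lam0(1)]) simp
    fix y assume "y \<in> C10 m 2 ` ?L"
    then obtain lam where lam: "lam \<in> ?L" and y: "y = C10 m 2 lam" by auto
    show "Kc (W x1 0) (W x2 0) \<le> y" unfolding y C10v[OF lam]
      using lb[OF lam x12(1)] lb[OF lam x12(2)] l0[OF lam] a01 by (intro Kmono) auto
  qed
  define pp where "pp lam = lam (cz m) + lam (co m)" for lam :: "(nat \<Rightarrow> nat) \<Rightarrow> real"
  have rank1: "{D \<in> det_maps m 2. det_rank m 2 D = 1} = {cz m, co m}"
    using rank_char[OF m] cz_in co_in by auto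
  have P_eq: "lower_P1 m 2 W = Inf (pp ` ?L)"
    unfolding lower_P1_def rank1 pp_def using cz_ne_co[OF m] by simp
  define P where "P = Inf (pp ` ?L)"
  have bddP: "bdd_below (pp ` ?L)" using l0 by (intro bdd_belowI[of _ 0]) (auto simp: pp_def)
  have P_le: "P \<le> pp lam" if "lam \<in> ?L" for lam
    unfolding P_def using that bddP by (intro cInf_lower) auto
  have P0: "0 \<le> P" unfolding P_def using neL l0 by (intro cInf_greatest) (auto simp: pp_def)
  have P1: "P \<le> 1" using P_le[OF lam0(1)] lsum[OF lam0(1)] by (simp add: pp_def)
  have ZC: "capacity {0..<2} {0..<2} (Z_chan P) = Kc P 1"
  proof -
    have ch: "is_channel {0..<2} {0..<2} (Z_chan P)"
      using P0 P1 by (auto simp: is_channel_def prob_dist_def Z_chan_def two_set)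
    have "capacity {0..<2} {0..<2} (Z_chan P) = Kc (Z_chan P 1 0) (Z_chan P 0 0)"
      by (rule cap_bin[OF _ ch]) (use P0 P1 in \<open>auto simp: Z_chan_def two_set\<close>)
    then show ?thesis by (simp add: Z_chan_def)
  qed
  have upC: "C10 m 2 lam \<le> Kc P 1" if lam: "lam \<in> ?L" for lam
  proof -
    have "C10 m 2 lam \<le> Kc (pp lam) 1"
      unfolding C10v[OF lam] pp_def using l0[OF lam] lsum[OF lam] by (intro Kconv) auto
    also have "\<dots> \<le> Kc P 1" using P0 P_le[OF lam] lsum[OF lam] by (intro Kmono) (auto simp: pp_def)
    finally show ?thesis .
  qed
  have bddC: "bdd_above (C10 m 2 ` ?L)" using upC by (intro bdd_aboveI) auto
  have C10pp: "C10 m 2 lam = Kc (pp lam) 1" if lam: "lam \<in> ?L" "lam (cz m) = 0 \<or> lam (co m) = 0" for lam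
  proof (cases "lam (co m) = 0")
    case True then show ?thesis using C10v[OF lam(1)] by (simp add: pp_def)
  next
    case False
    hence "lam (cz m) = 0" using lam by simp
    then show ?thesis using C10v[OF lam(1)] Ksym[of 0 "1 - lam (co m)"] by (simp add: pp_def)
  qed
  let ?S = "Sup (C10 m 2 ` ?L)"
  have upper: "upper_C10 m 2 W = Kc P 1"
    unfolding upper_C10_def
  proof (rule antisym)
    show "?S \<le> Kc P 1" using neL upC by (intro cSup_least) auto
    show "Kc P 1 \<le> ?S" unfolding Kc_def
    proof (rule cSup_least)
      fix y assume "y \<in> Gf P 1 ` {0..1}"
      then obtain t where t: "0 \<le> t" "t \<le> 1" and y: "y = Gf P 1 t" by auto
      show "y \<le> ?S"
      proof (rule ccontr)
        assume "\<not> y \<le> ?S"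
        hence ep: "y - ?S > 0" by simp
        have P01: "P \<in> {0..1}" using P0 P1 by simp
        obtain d where d: "d > 0" and dd: "\<And>p. p \<in> {0..1} \<Longrightarrow> dist p P < d \<Longrightarrow> dist (Gf p 1 t) (Gf P 1 t) < y - ?S"
          using Gf_cont[OF t] P01 ep unfolding continuous_on_iff by metis
        have "Inf (pp ` ?L) < P + d" using d by (simp add: P_def)
        then obtain q where q: "q \<in> pp ` ?L" "q < P + d" using cInf_lessD[of "pp ` ?L" "P + d"] neL by blast
        then obtain lam where lam: "lam \<in> ?L" and qlam: "q = pp lam" by auto
        obtain lam' where lam': "lam' \<in> ?L" "lam' (cz m) = 0 \<or> lam' (co m) = 0"
          and le: "lam' (cz m) + lam' (co m) \<le> lam (cz m) + lam (co m)"
          using reduce[OF m2 lam] by blast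
        have p1: "P \<le> pp lam'" using P_le[OF lam'(1)] .
        have p2: "pp lam' < P + d" using le q qlam by (simp add: pp_def)
        have p3: "pp lam' \<in> {0..1}" using l0[OF lam'(1)] lsum[OF lam'(1)] by (simp add: pp_def)
        have "dist (pp lam') P < d" using p1 p2 by (simp add: dist_real_def)
        hence "dist (Gf (pp lam') 1 t) (Gf P 1 t) < y - ?S" using dd p3 by blast
        hence "Gf (pp lam') 1 t > ?S" using y by (simp add: dist_real_def abs_less_iff)
        moreover have "Gf (pp lam') 1 t \<le> Kc (pp lam') 1" using p3 t by (intro Gf_le_Kc) auto
        moreover have "Kc (pp lam') 1 = C10 m 2 lam'" using C10pp[OF lam'] by simp
        moreover have "C10 m 2 lam' \<le> ?S" using lam'(1) bddC by (intro cSup_upper) auto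
        ultimately show False by simp
      qed
    qed auto
  qed
  show ?thesis using lower upper ZC P_eq by (simp add: P_def)
qed

end
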